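(* For every sequent $\Gamma\Rightarrow\Delta$ of $\mathtt{TPDL}$: if $\Gamma\Rightarrow\Delta$ is valid, then $\Gamma\Rightarrow\Delta$ is provable in $\mathtt{GTPDL}$.
   Context: Fix sets $\mathsf{Prop}$ of propositional variables and $\mathsf{AtProg}$ of atomic programs. Formulas and programs of $\mathtt{TPDL}$ are defined by mutual induction: $\varphi ::= \bot \mid p \mid (\varphi\to\varphi) \mid [\pi]\varphi \mid [\pi]^{\leftarrow}\varphi$ and $\pi ::= \alpha \mid \pi;\pi \mid \pi\cup\pi \mid \pi^{*} \mid \varphi?$, where $p\in\mathsf{Prop}$, $\alpha\in\mathsf{AtProg}$. Abbreviations: $\neg\varphi:=\varphi\to\bot$; for a set $\Gamma$, $[\pi]\Gamma=\{[\pi]\varphi:\varphi\in\Gamma\}$, $[\pi]^{\leftarrow}\Gamma=\{[\pi]^{\leftarrow}\varphi:\varphi\in\Gamma\}$. A model is $M=(W,(R_\alpha)_{\alpha\in\mathsf{AtProg}},V)$, $W\neq\emptyset$, $R_\alpha\subseteq W\times W$, $V:W\to\mathcal P(\mathsf{Prop})$. $R_{\pi_0;\pi_1}$ is relational composition, $R_{\pi_0\cup\pi_1}=R_{\pi_0}\cup R_{\pi_1}$, $R_{\pi^*}$ the reflexive–transitive closure of $R_\pi$, $R_{\psi?}=\{(w,w):M,w\models\psi\}$. $M,w\not\models\bot$; $M,w\models p$ iff $p\in V(w)$; $\to$ classical; $M,w\models[\pi]\varphi$ iff $M,v\models\varphi$ whenever $wR_\pi v$; $M,w\models[\pi]^{\leftarrow}\varphi$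 iff $M,v\models\varphi$ whenever $vR_\pi w$. A sequent $\Gamma\Rightarrow\Delta$ is a pair of finite sets of formulas; it is valid if in every model at every state, truth of all formulas of $\Gamma$ implies truth of some formula of $\Delta$. $\mathtt{GTPDL}$ rules (premises / conclusion): (Ax) / $\Gamma\Rightarrow\Delta$ with $\Gamma\cap\Delta\neq\emptyset$; ($\bot$) / $\Gamma,\bot\Rightarrow\Delta$; ($\to$L) $\Gamma\Rightarrow\varphi,\Delta$ and $\Gamma,\psi\Rightarrow\Delta$ / $\Gamma,\varphi\to\psi\Rightarrow\Delta$; ($\to$R) $\Gamma,\varphi\Rightarrow\psi,\Delta$ / $\Gamma\Rightarrow\varphi\to\psi,\Delta$; (Wk) $\Gamma\Rightarrow\Delta$ / $\Gamma'\Rightarrow\Delta'$ with $\Gamma\subseteq\Gamma',\Delta\subseteq\Delta'$; (Cut) $\Gamma\Rightarrow\varphi,\Delta$ and $\Gamma,\varphi\Rightarrow\Delta$ / $\Gamma\Rightarrow\Delta$; ($[\,]$) $\Gamma\Rightarrow\varphi,[\pi]^{\leftarrow}\Delta$ / $[\pi]\Gamma\Rightarrow[\pi]\varphi,\Delta$; ($[\,]^{\leftarrow}$) $\Gamma\Rightarrow\varphi,[\pi]\Delta$ / $[\pi]^{\leftarrow}\Gamma\Rightarrow[\pi]^{\leftarrow}\varphi,\Delta$; ($[;]$L) $\Gamma,[\pi_0][\pi_1]\varphi\Rightarrow\Delta$ / $\Gamma,[\pi_0;\pi_1]\varphi\Rightarrow\Delta$; ($[;]$R) $\Gamma\Rightarrow[\pi_0][\pi_1]\varphi,\Delta$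 / $\Gamma\Rightarrow[\pi_0;\pi_1]\varphi,\Delta$; ($[\cup]$L) $\Gamma,[\pi_0]\varphi,[\pi_1]\varphi\Rightarrow\Delta$ / $\Gamma,[\pi_0\cup\pi_1]\varphi\Rightarrow\Delta$; ($[\cup]$R) $\Gamma\Rightarrow\Delta,[\pi_0]\varphi$ and $\Gamma\Rightarrow\Delta,[\pi_1]\varphi$ / $\Gamma\Rightarrow[\pi_0\cup\pi_1]\varphi,\Delta$; ($[*]$L) $\Gamma,\varphi,[\pi][\pi^*]\varphi\Rightarrow\Delta$ / $\Gamma,[\pi^*]\varphi\Rightarrow\Delta$; ($[*]$R) $\Gamma,\varphi\Rightarrow[\pi]\varphi$ / $[\pi^*]\Gamma,\varphi\Rightarrow[\pi^*]\varphi$; ($[?]$L) $\Gamma\Rightarrow\varphi,\Delta$ and $\Gamma,\psi\Rightarrow\Delta$ / $\Gamma,[\varphi?]\psi\Rightarrow\Delta$; ($[?]$R) $\Gamma,\varphi\Rightarrow\psi,\Delta$ / $\Gamma\Rightarrow[\varphi?]\psi,\Delta$. A $\mathtt{GTPDL}$ proof is a finite tree of sequents, each node the conclusion of a rule instance whose premises are its children (leaves are Ax or $\bot$ instances); provable means having such a proof with the given sequent at the root. *)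

theory Defs
  imports Main
begin

datatype ('p, 'a) fm =
    Bot
  | Atom 'p
  | Imp "('p, 'a) fm" "('p, 'a) fm"
  | Box "('p, 'a) pg" "('p, 'a) fm"
  | BoxC "('p, 'a) pg" "('p, 'a) fm"
and ('p, 'a) pg =
    At 'a
  | Seq "('p, 'a) pg" "('p, 'a) pg"
  | Ch "('p, 'a) pg" "('p, 'a) pg"
  | Star "('p, 'a) pg"
  | Test "('p, 'a) fm"

record ('w, 'p, 'a) model =
  W :: "'w set"
  R :: "'a \<Rightarrow> ('w \<times> 'w) set"
  V :: "'w \<Rightarrow> 'p set"

definition is_model :: "('w, 'p, 'a) model \<Rightarrow> bool" where
  "is_model M \<longleftrightarrow> W M \<noteq> {} \<and> (\<forall>a. R M a \<subseteq> W M \<times> W M)"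

fun sat :: "('w, 'p, 'a) model \<Rightarrow> 'w \<Rightarrow> ('p, 'a) fm \<Rightarrow> bool"
and rel :: "('w, 'p, 'a) model \<Rightarrow> ('p, 'a) pg \<Rightarrow> ('w \<times> 'w) set" where
  "sat M w Bot = False"
| "sat M w (Atom p) = (p \<in> V M w)"
| "sat M w (Imp f g) = (sat M w f \<longrightarrow> sat M w g)"
| "sat M w (Box \<pi> f) = (\<forall>v. (w, v) \<in> rel M \<pi> \<longrightarrow> sat M v f)"
| "sat M w (BoxC \<pi> f) = (\<forall>v. (v, w) \<in> rel M \<pi> \<longrightarrow> sat M v f)"
| "rel M (At a) = R M a"
| "rel M (Seq \<pi>0 \<pi>1) = rel M \<pi>0 O rel M \<pi>1"
| "rel M (Ch \<pi>0 \<pi>1) = rel M \<pi>0 \<union> rel M \<pi>1"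
| "rel M (Star \<pi>) = Id_on (W M) \<union> (rel M \<pi>)\<^sup>+"
| "rel M (Test f) = {(w, w) | w. w \<in> W M \<and> sat M w f}"

definition valid_over :: "'w itself \<Rightarrow> ('p, 'a) fm set \<Rightarrow> ('p, 'a) fm set \<Rightarrow> bool" where
  "valid_over _ \<Gamma> \<Delta> \<longleftrightarrow>
     (\<forall>(M :: ('w, 'p, 'a) model) w. is_model M \<longrightarrow> w \<in> W M \<longrightarrow>
        (\<forall>f\<in>\<Gamma>. sat M w f) \<longrightarrow> (\<exists>g\<in>\<Delta>. sat M w g))"

definition valid :: "('p, 'a) fm set \<Rightarrow> ('p, 'a) fm set \<Rightarrow> bool" where
  "valid \<Gamma> \<Delta> \<longleftrightarrow> valid_over TYPE(('p, 'a) fm set) \<Gamma> \<Delta>"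

definition boxes :: "('p, 'a) pg \<Rightarrow> ('p, 'a) fm set \<Rightarrow> ('p, 'a) fm set" where
  "boxes \<pi> \<Gamma> = Box \<pi> ` \<Gamma>"

definition boxesC :: "('p, 'a) pg \<Rightarrow> ('p, 'a) fm set \<Rightarrow> ('p, 'a) fm set" where
  "boxesC \<pi> \<Gamma> = BoxC \<pi> ` \<Gamma>"

inductive prov :: "('p, 'a) fm set \<Rightarrow> ('p, 'a) fm set \<Rightarrow> bool" where
  Ax: "finite \<Gamma> \<Longrightarrow> finite \<Delta> \<Longrightarrow> \<Gamma> \<inter> \<Delta> \<noteq> {} \<Longrightarrow> prov \<Gamma> \<Delta>"
| BotL: "finite \<Gamma> \<Longrightarrow> finite \<Delta> \<Longrightarrow> prov (insert Bot \<Gamma>) \<Delta>"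
| ImpL: "prov \<Gamma> (insert f \<Delta>) \<Longrightarrow> prov (insert g \<Gamma>) \<Delta> \<Longrightarrow> prov (insert (Imp f g) \<Gamma>) \<Delta>"
| ImpR: "prov (insert f \<Gamma>) (insert g \<Delta>) \<Longrightarrow> prov \<Gamma> (insert (Imp f g) \<Delta>)"
| Wk: "prov \<Gamma> \<Delta> \<Longrightarrow> \<Gamma> \<subseteq> \<Gamma>' \<Longrightarrow> \<Delta> \<subseteq> \<Delta>' \<Longrightarrow> finite \<Gamma>' \<Longrightarrow> finite \<Delta>' \<Longrightarrow> prov \<Gamma>' \<Delta>'"
| Cut: "prov \<Gamma> (insert f \<Delta>) \<Longrightarrow> prov (insert f \<Gamma>) \<Delta> \<Longrightarrow> prov \<Gamma> \<Delta>"
| BoxR: "prov \<Gamma> (insert f (boxesC \<pi> \<Delta>)) \<Longrightarrow> prov (boxes \<pi> \<Gamma>) (insert (Box \<pi> f) \<Delta>)"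
| BoxCR: "prov \<Gamma> (insert f (boxes \<pi> \<Delta>)) \<Longrightarrow> prov (boxesC \<pi> \<Gamma>) (insert (BoxC \<pi> f) \<Delta>)"
| SeqL: "prov (insert (Box \<pi>0 (Box \<pi>1 f)) \<Gamma>) \<Delta> \<Longrightarrow> prov (insert (Box (Seq \<pi>0 \<pi>1) f) \<Gamma>) \<Delta>"
| SeqR: "prov \<Gamma> (insert (Box \<pi>0 (Box \<pi>1 f)) \<Delta>) \<Longrightarrow> prov \<Gamma> (insert (Box (Seq \<pi>0 \<pi>1) f) \<Delta>)"
| ChL: "prov (insert (Box \<pi>0 f) (insert (Box \<pi>1 f) \<Gamma>)) \<Delta> \<Longrightarrow> prov (insert (Box (Ch \<pi>0 \<pi>1) f) \<Gamma>) \<Delta>"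
| ChR: "prov \<Gamma> (insert (Box \<pi>0 f) \<Delta>) \<Longrightarrow> prov \<Gamma> (insert (Box \<pi>1 f) \<Delta>) \<Longrightarrow> prov \<Gamma> (insert (Box (Ch \<pi>0 \<pi>1) f) \<Delta>)"
| StarL: "prov (insert f (insert (Box \<pi> (Box (Star \<pi>) f)) \<Gamma>)) \<Delta> \<Longrightarrow> prov (insert (Box (Star \<pi>) f) \<Gamma>) \<Delta>"
| StarR: "prov (insert f \<Gamma>) {Box \<pi> f} \<Longrightarrow> prov (insert f (boxes (Star \<pi>) \<Gamma>)) {Box (Star \<pi>) f}"
| TestL: "prov \<Gamma> (insert f \<Delta>) \<Longrightarrow> prov (insert g \<Gamma>) \<Delta> \<Longrightarrow> prov (insert (Box (Test f) g) \<Gamma>) \<Delta>"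
| TestR: "prov (insert f \<Gamma>) (insert g \<Delta>) \<Longrightarrow> prov \<Gamma> (insert (Box (Test f) g) \<Delta>)"

end

theory Submission
  imports Defs
begin

abbreviation neg :: "('p,'a) fm \<Rightarrow> ('p,'a) fm" where "neg f \<equiv> Imp f Bot"

lemma prov_fin: "prov \<Gamma> \<Delta> \<Longrightarrow> finite \<Gamma> \<and> finite \<Delta>"
  by (induction rule: prov.induct) (auto simp: boxes_def boxesC_def finite_image_iff inj_on_def)

lemma finL: "prov \<Gamma> \<Delta> \<Longrightarrow> finite \<Gamma>" using prov_fin by blast
lemma finR: "prov \<Gamma> \<Delta> \<Longrightarrow> finite \<Delta>" using prov_fin by blast

lemma ax: "finite \<Gamma> \<Longrightarrow> finite \<Delta> \<Longrightarrow> f \<in> \<Gamma> \<Longrightarrow> f \<in> \<Delta> \<Longrightarrow> prov \<Gamma> \<Delta>"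
  using Ax by blast

lemma wk: "prov \<Gamma> \<Delta> \<Longrightarrow> \<Gamma> \<subseteq> \<Gamma>' \<Longrightarrow> \<Delta> \<subseteq> \<Delta>' \<Longrightarrow> finite \<Gamma>' \<Longrightarrow> finite \<Delta>' \<Longrightarrow> prov \<Gamma>' \<Delta>'"
  by (rule Wk)

lemma negL: "prov \<Gamma> (insert f \<Delta>) \<Longrightarrow> prov (insert (neg f) \<Gamma>) \<Delta>"
  by (rule ImpL, assumption, rule BotL) (auto dest: prov_fin)

lemma negR: "prov (insert f \<Gamma>) \<Delta> \<Longrightarrow> prov \<Gamma> (insert (neg f) \<Delta>)"
proof -
  assume h: "prov (insert f \<Gamma>) \<Delta>"
  have fg: "finite \<Gamma>" "finite \<Delta>" using prov_fin[OF h] by auto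
  show ?thesis by (rule ImpR, rule wk[OF h]) (use fg in auto)
qed

lemma negL_inv: "prov (insert (neg f) \<Gamma>) \<Delta> \<Longrightarrow> prov \<Gamma> (insert f \<Delta>)"
proof -
  assume h: "prov (insert (neg f) \<Gamma>) \<Delta>"
  have fg: "finite \<Gamma>" "finite \<Delta>" using prov_fin[OF h] by auto
  have 1: "prov \<Gamma> (insert (neg f) (insert f \<Delta>))"
    by (rule negR, rule ax) (use fg in auto)
  have 2: "prov (insert (neg f) \<Gamma>) (insert f \<Delta>)"
    by (rule wk[OF h]) (use fg in auto)
  show ?thesis by (rule Cut[OF 1 2])
qed

lemma negR_inv: "prov \<Gamma> (insert (neg f) \<Delta>) \<Longrightarrow> prov (insert f \<Gamma>) \<Delta>"
proof -
  assume h: "prov \<Gamma> (insert (neg f) \<Delta>)"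
  have fg: "finite \<Gamma>" "finite \<Delta>" using prov_fin[OF h] by auto
  have 1: "prov (insert f \<Gamma>) (insert (neg f) \<Delta>)"
    by (rule wk[OF h]) (use fg in auto)
  have 2: "prov (insert (neg f) (insert f \<Gamma>)) \<Delta>"
    by (rule negL, rule ax) (use fg in auto)
  show ?thesis by (rule Cut[OF 1 2])
qed

lemma trR: "prov {a} {b} \<Longrightarrow> prov \<Gamma> (insert a \<Delta>) \<Longrightarrow> prov \<Gamma> (insert b \<Delta>)"
proof -
  assume ab: "prov {a} {b}" and h: "prov \<Gamma> (insert a \<Delta>)"
  have fg: "finite \<Gamma>" "finite \<Delta>" using prov_fin[OF h] by auto
  have 1: "prov \<Gamma> (insert a (insert b \<Delta>))" by (rule wk[OF h]) (use fg in auto)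
  have 2: "prov (insert a \<Gamma>) (insert b \<Delta>)" by (rule wk[OF ab]) (use fg in auto)
  show ?thesis by (rule Cut[OF 1 2])
qed

lemma trL: "prov {a} {b} \<Longrightarrow> prov (insert b \<Gamma>) \<Delta> \<Longrightarrow> prov (insert a \<Gamma>) \<Delta>"
proof -
  assume ab: "prov {a} {b}" and h: "prov (insert b \<Gamma>) \<Delta>"
  have fg: "finite \<Gamma>" "finite \<Delta>" using prov_fin[OF h] by auto
  have 1: "prov (insert a \<Gamma>) (insert b \<Delta>)" by (rule wk[OF ab]) (use fg in auto)
  have 2: "prov (insert b (insert a \<Gamma>)) \<Delta>" by (rule wk[OF h]) (use fg in auto)
  show ?thesis by (rule Cut[OF 1 2])
qed

lemma cut1: "prov \<Gamma> (insert f \<Delta>) \<Longrightarrow> prov (insert f \<Gamma>) \<Delta> \<Longrightarrow> prov \<Gamma> \<Delta>"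
  by (rule Cut)

lemma trans1: "prov {a} {b} \<Longrightarrow> prov {b} {c} \<Longrightarrow> prov {a} {c}"
  using trR by fastforce

lemma multicut: "finite S \<Longrightarrow> (\<forall>s\<in>S. prov \<Gamma> (insert s \<Delta>)) \<Longrightarrow> prov (S \<union> \<Gamma>) \<Delta> \<Longrightarrow> prov \<Gamma> \<Delta>"
proof (induction S rule: finite_induct)
  case empty then show ?case by simp
next
  case (insert s S)
  have h: "prov \<Gamma> (insert s \<Delta>)" using insert by auto
  have fg: "finite \<Gamma>" "finite \<Delta>" using prov_fin[OF h] by auto
  have "prov (S \<union> \<Gamma>) \<Delta>"
  proof (rule Cut[of _ s])
    show "prov (S \<union> \<Gamma>) (insert s \<Delta>)" by (rule wk[OF h]) (use fg insert in auto)
    show "prov (insert s (S \<union> \<Gamma>)) \<Delta>" using insert by simp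
  qed
  then show ?case using insert by auto
qed

lemma K: "prov T {f} \<Longrightarrow> prov (boxes p T) {Box p f}"
  using BoxR[of T f p "{}"] by (simp add: boxesC_def)

lemma KC: "prov T {f} \<Longrightarrow> prov (boxesC p T) {BoxC p f}"
  using BoxCR[of T f p "{}"] by (simp add: boxes_def)

lemma K1: "prov {a} {f} \<Longrightarrow> prov {Box p a} {Box p f}"
  using K[of "{a}" f p] by (simp add: boxes_def)

lemma K1C: "prov {a} {f} \<Longrightarrow> prov {BoxC p a} {BoxC p f}"
  using KC[of "{a}" f p] by (simp add: boxesC_def)

lemma BoxMulti: "finite T \<Longrightarrow> (\<forall>x\<in>T. prov \<Gamma> (insert (Box p x) \<Delta>)) \<Longrightarrow> prov T {f}
   \<Longrightarrow> finite \<Gamma> \<Longrightarrow> finite \<Delta> \<Longrightarrow> prov \<Gamma> (insert (Box p f) \<Delta>)"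
proof -
  assume T: "finite T" and all: "\<forall>x\<in>T. prov \<Gamma> (insert (Box p x) \<Delta>)" and h: "prov T {f}"
    and fg: "finite \<Gamma>" "finite \<Delta>"
  have k: "prov (boxes p T) {Box p f}" by (rule K[OF h])
  show ?thesis
  proof (rule multicut[of "boxes p T"])
    show "finite (boxes p T)" using T by (simp add: boxes_def)
    show "\<forall>s\<in>boxes p T. prov \<Gamma> (insert s (insert (Box p f) \<Delta>))"
    proof
      fix s assume "s \<in> boxes p T"
      then obtain x where x: "x \<in> T" "s = Box p x" by (auto simp: boxes_def)
      show "prov \<Gamma> (insert s (insert (Box p f) \<Delta>))"
        by (rule wk[of \<Gamma> "insert (Box p x) \<Delta>"]) (use all x fg in auto)
    qed
    show "prov (boxes p T \<union> \<Gamma>) (insert (Box p f) \<Delta>)"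
      by (rule wk[OF k]) (use T fg in \<open>auto simp: boxes_def\<close>)
  qed
qed

lemma BoxCMulti: "finite T \<Longrightarrow> (\<forall>x\<in>T. prov \<Gamma> (insert (BoxC p x) \<Delta>)) \<Longrightarrow> prov T {f}
   \<Longrightarrow> finite \<Gamma> \<Longrightarrow> finite \<Delta> \<Longrightarrow> prov \<Gamma> (insert (BoxC p f) \<Delta>)"
proof -
  assume T: "finite T" and all: "\<forall>x\<in>T. prov \<Gamma> (insert (BoxC p x) \<Delta>)" and h: "prov T {f}"
    and fg: "finite \<Gamma>" "finite \<Delta>"
  have k: "prov (boxesC p T) {BoxC p f}" by (rule KC[OF h])
  show ?thesis
  proof (rule multicut[of "boxesC p T"])
    show "finite (boxesC p T)" using T by (simp add: boxesC_def)
    show "\<forall>s\<in>boxesC p T. prov \<Gamma> (insert s (insert (BoxC p f) \<Delta>))"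
    proof
      fix s assume "s \<in> boxesC p T"
      then obtain x where x: "x \<in> T" "s = BoxC p x" by (auto simp: boxesC_def)
      show "prov \<Gamma> (insert s (insert (BoxC p f) \<Delta>))"
        by (rule wk[of \<Gamma> "insert (BoxC p x) \<Delta>"]) (use all x fg in auto)
    qed
    show "prov (boxesC p T \<union> \<Gamma>) (insert (BoxC p f) \<Delta>)"
      by (rule wk[OF k]) (use T fg in \<open>auto simp: boxesC_def\<close>)
  qed
qed

lemma tense: "prov {} {f, Box p (neg (BoxC p f))}"
proof -
  have "prov {} (insert (neg (BoxC p f)) (boxesC p {f}))"
    by (rule negR, rule ax) (auto simp: boxesC_def)
  from BoxR[OF this] show ?thesis by (simp add: boxes_def insert_commute)
qed

lemma tenseC: "prov {} {f, BoxC p (neg (Box p f))}"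
proof -
  have "prov {} (insert (neg (Box p f)) (boxes p {f}))"
    by (rule negR, rule ax) (auto simp: boxes_def)
  from BoxCR[OF this] show ?thesis by (simp add: boxesC_def insert_commute)
qed

lemma adjC: "prov {} {f, Box p g} \<Longrightarrow> prov {} {BoxC p f, g}"
  using BoxCR[of "{}" f p "{g}"] by (simp add: boxes_def boxesC_def)

lemma adj: "prov {} {f, BoxC p g} \<Longrightarrow> prov {} {Box p f, g}"
  using BoxR[of "{}" f p "{g}"] by (simp add: boxes_def boxesC_def)

lemma seq_fwd: "prov {Box (Seq p q) f} {Box p (Box q f)}"
  by (rule SeqL[of p q f "{}", simplified], rule ax) auto

lemma ch_fwd1: "prov {Box (Ch p q) f} {Box p f}"
  by (rule ChL[of p f q "{}", simplified], rule ax) auto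

lemma ch_fwd2: "prov {Box (Ch p q) f} {Box q f}"
  by (rule ChL[of p f q "{}", simplified], rule ax) auto

lemma star_fwd1: "prov {Box (Star p) f} {f}"
  by (rule StarL[of f p "{}", simplified], rule ax) auto

lemma star_fwd2: "prov {Box (Star p) f} {Box p (Box (Star p) f)}"
  by (rule StarL[of f p "{}", simplified], rule ax) auto

lemma test_fwd: "prov {Box (Test g) f, g} {f}"
proof -
  have "prov (insert (Box (Test g) f) {g}) {f}"
    by (rule TestL; rule ax) auto
  then show ?thesis by (simp add: insert_commute)
qed

fun succ :: "('p,'a) fm \<Rightarrow> ('p,'a) fm set" where
  "succ Bot = {}"
| "succ (Atom p) = {}"
| "succ (Imp f g) = {f, g}"
| "succ (Box (At a) f) = {f}"
| "succ (Box (Seq p q) f) = {Box p (Box q f), Box q f, f}"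
| "succ (Box (Ch p q) f) = {Box p f, Box q f, f}"
| "succ (Box (Star p) f) = {f, Box p (Box (Star p) f)}"
| "succ (Box (Test g) f) = {g, f}"
| "succ (BoxC (At a) f) = {f}"
| "succ (BoxC (Seq p q) f) = {BoxC q (BoxC p f), BoxC p f, f}"
| "succ (BoxC (Ch p q) f) = {BoxC p f, BoxC q f, f}"
| "succ (BoxC (Star p) f) = {f, BoxC p (BoxC (Star p) f)}"
| "succ (BoxC (Test g) f) = {g, f}"

fun cl :: "('p,'a) fm \<Rightarrow> ('p,'a) fm set"
and clB :: "('p,'a) pg \<Rightarrow> ('p,'a) fm \<Rightarrow> ('p,'a) fm set"
and clC :: "('p,'a) pg \<Rightarrow> ('p,'a) fm \<Rightarrow> ('p,'a) fm set" where
  "cl Bot = {Bot}"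
| "cl (Atom p) = {Atom p}"
| "cl (Imp f g) = insert (Imp f g) (cl f \<union> cl g)"
| "cl (Box \<pi> f) = clB \<pi> f \<union> cl f"
| "cl (BoxC \<pi> f) = clC \<pi> f \<union> cl f"
| "clB (At a) f = {Box (At a) f}"
| "clB (Seq p q) f = insert (Box (Seq p q) f) (clB p (Box q f) \<union> clB q f)"
| "clB (Ch p q) f = insert (Box (Ch p q) f) (clB p f \<union> clB q f)"
| "clB (Star p) f = insert (Box (Star p) f) (clB p (Box (Star p) f))"
| "clB (Test g) f = insert (Box (Test g) f) (cl g)"
| "clC (At a) f = {BoxC (At a) f}"
| "clC (Seq p q) f = insert (BoxC (Seq p q) f) (clC q (BoxC p f) \<union> clC p f)"
| "clC (Ch p q) f = insert (BoxC (Ch p q) f) (clC p f \<union> clC q f)"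
| "clC (Star p) f = insert (BoxC (Star p) f) (clC p (BoxC (Star p) f))"
| "clC (Test g) f = insert (BoxC (Test g) f) (cl g)"

lemma cl_fin: "finite (cl f)" "finite (clB p f)" "finite (clC p f)"
  by (induction f and p f and p f rule: cl_clB_clC.induct) auto

lemma clB_self[simp]: "Box p f \<in> clB p f" by (cases p) auto
lemma clC_self[simp]: "BoxC p f \<in> clC p f" by (cases p) auto

lemma cl_self[simp]: "f \<in> cl f"
  by (cases f) (auto simp: clB_self clC_self)

lemma cl_closed:
  "\<forall>X\<in>cl f. succ X \<subseteq> cl f"
  "\<forall>X\<in>clB p f. succ X \<subseteq> clB p f \<union> cl f"
  "\<forall>X\<in>clC p f. succ X \<subseteq> clC p f \<union> cl f"
proof (induction f and p f and p f rule: cl_clB_clC.induct)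
  case (3 f g) then show ?case using cl_self[of f] cl_self[of g] by auto
next
  case (4 \<pi> f) then show ?case by auto
next
  case (5 \<pi> f) then show ?case by auto
next
  case (7 p q f) then show ?case by auto
next
  case (8 p q f) then show ?case by auto
next
  case (9 p f) then show ?case by auto
next
  case (10 g f) then show ?case by auto
next
  case (12 p q f) then show ?case by auto
next
  case (13 p q f) then show ?case by auto
next
  case (14 p f) then show ?case by auto
next
  case (15 g f) then show ?case by auto
qed (auto simp: cl_self)

fun conjs :: "('p,'a) fm list \<Rightarrow> ('p,'a) fm" where
  "conjs [] = neg Bot"
| "conjs (x # xs) = neg (Imp x (neg (conjs xs)))"

lemma conjR: "finite \<Gamma> \<Longrightarrow> finite \<Delta> \<Longrightarrow> (\<forall>x\<in>set xs. prov \<Gamma> (insert x \<Delta>))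
   \<Longrightarrow> prov \<Gamma> (insert (conjs xs) \<Delta>)"
proof (induction xs)
  case Nil
  show ?case by (simp, rule negR, rule BotL) (use Nil in auto)
next
  case (Cons x xs)
  have "prov (insert (Imp x (neg (conjs xs))) \<Gamma>) \<Delta>"
  proof (rule ImpL)
    show "prov \<Gamma> (insert x \<Delta>)" using Cons by auto
    show "prov (insert (neg (conjs xs)) \<Gamma>) \<Delta>" by (rule negL) (use Cons in auto)
  qed
  then show ?case by (simp, rule negR)
qed

lemma conjL: "prov (set xs \<union> \<Gamma>) \<Delta> \<Longrightarrow> prov (insert (conjs xs) \<Gamma>) \<Delta>"
proof (induction xs arbitrary: \<Gamma>)
  case Nil
  have fg: "finite \<Gamma>" "finite \<Delta>" using prov_fin[OF Nil.prems] by auto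
  show ?case by (rule wk[OF Nil.prems]) (use fg in auto)
next
  case (Cons x xs)
  have "prov (set xs \<union> insert x \<Gamma>) \<Delta>" using Cons.prems by simp
  then have h: "prov (insert (conjs xs) (insert x \<Gamma>)) \<Delta>" by (rule Cons.IH)
  have "prov \<Gamma> (insert (Imp x (neg (conjs xs))) \<Delta>)"
    by (rule ImpR, rule negR) (use h in \<open>simp add: insert_commute\<close>)
  then show ?case by (simp, rule negL)
qed

lemma conjL_inv: "prov (insert (conjs xs) \<Gamma>) \<Delta> \<Longrightarrow> prov (set xs \<union> \<Gamma>) \<Delta>"
proof -
  assume h: "prov (insert (conjs xs) \<Gamma>) \<Delta>"
  have fg: "finite \<Gamma>" "finite \<Delta>" using prov_fin[OF h] by auto
  show ?thesis
  proof (rule Cut[of _ "conjs xs"])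
    show "prov (set xs \<union> \<Gamma>) (insert (conjs xs) \<Delta>)"
      by (rule conjR) (use fg in \<open>auto intro: ax\<close>)
    show "prov (insert (conjs xs) (set xs \<union> \<Gamma>)) \<Delta>"
      by (rule wk[OF h]) (use fg in auto)
  qed
qed

lemma negs_iff: "finite N \<Longrightarrow> prov (neg ` N \<union> \<Gamma>) \<Delta> \<longleftrightarrow> prov \<Gamma> (N \<union> \<Delta>)"
proof (induction N arbitrary: \<Delta> rule: finite_induct)
  case empty then show ?case by simp
next
  case (insert n N)
  have "prov (neg ` insert n N \<union> \<Gamma>) \<Delta> \<longleftrightarrow> prov (insert (neg n) (neg ` N \<union> \<Gamma>)) \<Delta>" by simp
  also have "\<dots> \<longleftrightarrow> prov (neg ` N \<union> \<Gamma>) (insert n \<Delta>)"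
    using negL negL_inv by blast
  also have "\<dots> \<longleftrightarrow> prov \<Gamma> (N \<union> insert n \<Delta>)" by (rule insert.IH)
  finally show ?case by simp
qed

lemma lind: "finite S \<Longrightarrow> \<not> prov X Y \<Longrightarrow> finite X \<Longrightarrow> finite Y \<Longrightarrow>
   \<exists>A\<subseteq>S. \<not> prov (X \<union> A) (Y \<union> (S - A))"
proof (induction S rule: finite_induct)
  case empty then show ?case by simp
next
  case (insert c S)
  then obtain A where A: "A \<subseteq> S" "\<not> prov (X \<union> A) (Y \<union> (S - A))" by auto
  have fA: "finite A" using A insert.hyps finite_subset by blast
  show ?case
  proof (cases "prov (insert c (X \<union> A)) (Y \<union> (S - A))")
    case True
    have n2: "\<not> prov (X \<union> A) (insert c (Y \<union> (S - A)))"
      using Cut[OF _ True] A by blast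
    show ?thesis
    proof (intro exI conjI)
      show "A \<subseteq> insert c S" using A by auto
      show "\<not> prov (X \<union> A) (Y \<union> (insert c S - A))"
      proof
        assume p: "prov (X \<union> A) (Y \<union> (insert c S - A))"
        have "prov (X \<union> A) (insert c (Y \<union> (S - A)))"
          by (rule wk[OF p]) (use insert fA in auto)
        with n2 show False by simp
      qed
    qed
  next
    case False
    show ?thesis
    proof (intro exI conjI)
      show "insert c A \<subseteq> insert c S" using A by auto
      show "\<not> prov (X \<union> insert c A) (Y \<union> (insert c S - insert c A))"
      proof
        assume p: "prov (X \<union> insert c A) (Y \<union> (insert c S - insert c A))"
        have "prov (insert c (X \<union> A)) (Y \<union> (S - A))"
          by (rule wk[OF p]) (use insert fA in auto)
        with False show False by simp
      qed
    qed
  qed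
qed

locale canon =
  fixes cs :: "('p,'a) fm list"
  assumes closed: "X \<in> set cs \<Longrightarrow> succ X \<subseteq> set cs"
begin

abbreviation C where "C \<equiv> set cs"

definition atom :: "('p,'a) fm set \<Rightarrow> bool" where
  "atom A \<longleftrightarrow> A \<subseteq> C \<and> \<not> prov A (C - A)"

definition ch :: "('p,'a) fm set \<Rightarrow> ('p,'a) fm" where
  "ch A = conjs (map (\<lambda>f. if f \<in> A then f else neg f) cs)"

lemma finC[simp]: "finite C" by simp

lemma atom_fin: "atom A \<Longrightarrow> finite A"
  unfolding atom_def using finite_subset by blast

lemma atoms_fin: "finite {A. atom A}"
proof -
  have "{A. atom A} \<subseteq> Pow C" by (auto simp: atom_def)
  then show ?thesis using finite_subset by blast
qed

lemma ch_set: "A \<subseteq> C \<Longrightarrow> set (map (\<lambda>f. if f \<in> A then f else neg f) cs) = A \<union> neg ` (C - A)"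
  by auto

lemma ch_iff: "A \<subseteq> C \<Longrightarrow> finite \<Gamma> \<Longrightarrow> finite \<Delta> \<Longrightarrow>
   prov (insert (ch A) \<Gamma>) \<Delta> \<longleftrightarrow> prov (A \<union> \<Gamma>) ((C - A) \<union> \<Delta>)"
proof -
  assume A: "A \<subseteq> C" and fg: "finite \<Gamma>" "finite \<Delta>"
  have "prov (insert (ch A) \<Gamma>) \<Delta> \<longleftrightarrow> prov ((A \<union> neg ` (C - A)) \<union> \<Gamma>) \<Delta>"
    using conjL[of "map (\<lambda>f. if f \<in> A then f else neg f) cs" \<Gamma> \<Delta>]
      conjL_inv[of "map (\<lambda>f. if f \<in> A then f else neg f) cs" \<Gamma> \<Delta>] ch_set[OF A] unfolding ch_def by auto
  also have "\<dots> \<longleftrightarrow> prov (neg ` (C - A) \<union> (A \<union> \<Gamma>)) \<Delta>"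
    by (simp add: Un_ac)
  also have "\<dots> \<longleftrightarrow> prov (A \<union> \<Gamma>) ((C - A) \<union> \<Delta>)"
    by (rule negs_iff) simp
  finally show ?thesis .
qed

lemma chR: "A \<subseteq> C \<Longrightarrow> finite \<Gamma> \<Longrightarrow> finite \<Delta> \<Longrightarrow>
   prov (A \<union> \<Gamma>) (insert (ch A) ((C - A) \<union> \<Delta>))"
  unfolding ch_def
proof (rule conjR)
  assume A: "A \<subseteq> C" and fg: "finite \<Gamma>" "finite \<Delta>"
  have fA: "finite A" using A finite_subset by blast
  show "finite (A \<union> \<Gamma>)" "finite (C - A \<union> \<Delta>)" using fA fg by auto
  show "\<forall>x\<in>set (map (\<lambda>f. if f \<in> A then f else neg f) cs). prov (A \<union> \<Gamma>) (insert x (C - A \<union> \<Delta>))"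
  proof
    fix x assume "x \<in> set (map (\<lambda>f. if f \<in> A then f else neg f) cs)"
    then obtain f where f: "f \<in> C" "x = (if f \<in> A then f else neg f)" by auto
    show "prov (A \<union> \<Gamma>) (insert x (C - A \<union> \<Delta>))"
    proof (cases "f \<in> A")
      case True then show ?thesis using f fA fg by (auto intro: ax)
    next
      case False
      have "prov (insert f (A \<union> \<Gamma>)) (C - A \<union> \<Delta>)" by (rule ax[of _ _ f]) (use f False fA fg in auto)
      then show ?thesis using False f by (auto intro: negR)
    qed
  qed
qed

lemma atom_no: "atom A \<Longrightarrow> X \<subseteq> A \<Longrightarrow> Y \<subseteq> C - A \<Longrightarrow> \<not> prov X Y"
proof
  assume a: "atom A" "X \<subseteq> A" "Y \<subseteq> C - A" "prov X Y"
  have "finite A" using a(1) atom_fin by blast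
  then have "prov A (C - A)" by (rule wk[OF a(4) a(2) a(3)]) simp
  with a(1) show False by (simp add: atom_def)
qed

lemma atom_mp: "atom A \<Longrightarrow> X \<subseteq> A \<Longrightarrow> b \<in> C \<Longrightarrow> prov X {b} \<Longrightarrow> b \<in> A"
  using atom_no[of A X "{b}"] by auto

lemma atom_mp1: "atom A \<Longrightarrow> a \<in> A \<Longrightarrow> b \<in> C \<Longrightarrow> prov {a} {b} \<Longrightarrow> b \<in> A"
  using atom_mp[of A "{a}" b] by auto

lemma ch_cons: "atom A \<Longrightarrow> \<not> prov {ch A} {}"
  using ch_iff[of A "{}" "{}"] by (auto simp: atom_def)

lemma ch_mem: "atom A \<Longrightarrow> f \<in> A \<Longrightarrow> prov {ch A} {f}"
  using ch_iff[of A "{}" "{f}"] atom_fin[of A] by (auto simp: atom_def intro: ax)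

lemma ch_nmem: "atom A \<Longrightarrow> f \<in> C \<Longrightarrow> f \<notin> A \<Longrightarrow> prov {ch A, f} {}"
  using ch_iff[of A "{f}" "{}"] atom_fin[of A] by (auto simp: atom_def intro: ax)

lemma ch_nmem': "atom A \<Longrightarrow> f \<in> C \<Longrightarrow> f \<notin> A \<Longrightarrow> prov {ch A} {neg f}"
  using ch_nmem[of A f] negR[of f "{ch A}" "{}"] by (simp add: insert_commute)

lemma ch_distinct: "atom A \<Longrightarrow> atom B \<Longrightarrow> A \<noteq> B \<Longrightarrow> prov {ch A, ch B} {}"
proof -
  assume a: "atom A" "atom B" "A \<noteq> B"
  then have AC: "A \<subseteq> C" "B \<subseteq> C" and fA: "finite A" "finite B" by (auto simp: atom_def atom_fin)
  obtain f where f: "f \<in> C" "(f \<in> A \<and> f \<notin> B) \<or> (f \<in> B \<and> f \<notin> A)"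
  proof -
    have "\<not> (A \<subseteq> B \<and> B \<subseteq> A)" using a(3) by blast
    then show ?thesis using AC that by blast
  qed
  have "prov (A \<union> B) ((C - A) \<union> (C - B))"
    by (rule ax[of _ _ f]) (use f fA in auto)
  then have "prov (insert (ch A) B) (C - B)" using ch_iff[of A "B" "C - B"] AC fA by auto
  then have "prov (B \<union> {ch A}) ((C - B) \<union> {})" by simp
  then have "prov (insert (ch B) {ch A}) {}" using ch_iff[of B "{ch A}" "{}"] AC by auto
  then show ?thesis by (simp add: insert_commute)
qed

lemma EXH: "Bad \<subseteq> {A. atom A} \<Longrightarrow> (\<forall>B. atom B \<longrightarrow> B \<notin> Bad \<longrightarrow> prov {ch B} {\<psi>})
   \<Longrightarrow> prov ((\<lambda>B. neg (ch B)) ` Bad) {\<psi>}"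
proof (rule ccontr)
  assume Bad: "Bad \<subseteq> {A. atom A}" and good: "\<forall>B. atom B \<longrightarrow> B \<notin> Bad \<longrightarrow> prov {ch B} {\<psi>}"
    and np: "\<not> prov ((\<lambda>B. neg (ch B)) ` Bad) {\<psi>}"
  let ?N = "(\<lambda>B. neg (ch B)) ` Bad"
  have fN: "finite ?N" using Bad atoms_fin finite_subset by blast
  obtain A where A: "A \<subseteq> C" "\<not> prov (?N \<union> A) ({\<psi>} \<union> (C - A))"
    using lind[OF finC np fN] by auto
  have fA: "finite A" using A finite_subset by blast
  have at: "atom A" unfolding atom_def
  proof (intro conjI notI)
    show "A \<subseteq> C" by fact
    assume "prov A (C - A)"
    then have "prov (?N \<union> A) ({\<psi>} \<union> (C - A))" by (rule wk) (use fN fA in auto)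
    with A show False by simp
  qed
  show False
  proof (cases "A \<in> Bad")
    case True
    have "prov (A \<union> (?N - {neg (ch A)})) (insert (ch A) ((C - A) \<union> {\<psi>}))"
      by (rule chR) (use A fN in auto)
    then have "prov (insert (neg (ch A)) (A \<union> (?N - {neg (ch A)}))) ((C - A) \<union> {\<psi>})"
      by (rule negL)
    moreover have "insert (neg (ch A)) (A \<union> (?N - {neg (ch A)})) = ?N \<union> A" using True by auto
    ultimately show False using A by (simp add: Un_commute)
  next
    case False
    then have "prov {ch A} {\<psi>}" using good at by auto
    then have "prov (A \<union> {}) ((C - A) \<union> {\<psi>})" using ch_iff[of A "{}" "{\<psi>}"] A by auto
    then have "prov (?N \<union> A) ({\<psi>} \<union> (C - A))" by (rule wk) (use fN fA in auto)
    with A show False by simp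
  qed
qed

end

lemma rs: "prov {} {neg a, b} \<Longrightarrow> prov {a} {b}"
  using negR_inv[of "{}" a "{b}"] by (simp add: insert_commute)

lemma rs': "prov {a} {b} \<Longrightarrow> prov {} {neg a, b}"
  using negR[of a "{}" "{b}"] by simp

lemma star_F: "prov {Box (Star p) \<chi>} {Box (Star p) (Box p \<chi>)}"
proof -
  let ?I = "Box (Star p) \<chi>"
  have "prov (insert ?I {}) {Box p ?I}" using star_fwd2[of p \<chi>] by simp
  from StarR[OF this] have 1: "prov {?I} {Box (Star p) ?I}" by (simp add: boxes_def)
  have 2: "prov {?I} {Box p \<chi>}" by (rule trans1[OF star_fwd2 K1[OF star_fwd1]])
  show ?thesis by (rule trans1[OF 1 K1[OF 2]])
qed

lemma cseq: "prov {BoxC (Seq p q) \<phi>} {BoxC q (BoxC p \<phi>)}"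
proof -
  let ?Z = "BoxC (Seq p q) \<phi>"
  have "prov {} (insert (Box (Seq p q) (neg ?Z)) {\<phi>})" using tense[of \<phi> "Seq p q"] by (simp add: insert_commute)
  from trR[OF seq_fwd this] have "prov {} {\<phi>, Box p (Box q (neg ?Z))}" by (simp add: insert_commute)
  from adjC[OF this] have "prov {} {BoxC p \<phi>, Box q (neg ?Z)}" .
  from adjC[OF this] have "prov {} {BoxC q (BoxC p \<phi>), neg ?Z}" .
  then show ?thesis by (intro rs) (simp add: insert_commute)
qed

lemma cch1: "prov {BoxC (Ch p q) \<phi>} {BoxC p \<phi>}"
proof -
  let ?Z = "BoxC (Ch p q) \<phi>"
  have "prov {} (insert (Box (Ch p q) (neg ?Z)) {\<phi>})" using tense[of \<phi> "Ch p q"] by (simp add: insert_commute)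
  from trR[OF ch_fwd1 this] have "prov {} {\<phi>, Box p (neg ?Z)}" by (simp add: insert_commute)
  from adjC[OF this] have "prov {} {BoxC p \<phi>, neg ?Z}" .
  then show ?thesis by (intro rs) (simp add: insert_commute)
qed

lemma cch2: "prov {BoxC (Ch p q) \<phi>} {BoxC q \<phi>}"
proof -
  let ?Z = "BoxC (Ch p q) \<phi>"
  have "prov {} (insert (Box (Ch p q) (neg ?Z)) {\<phi>})" using tense[of \<phi> "Ch p q"] by (simp add: insert_commute)
  from trR[OF ch_fwd2 this] have "prov {} {\<phi>, Box q (neg ?Z)}" by (simp add: insert_commute)
  from adjC[OF this] have "prov {} {BoxC q \<phi>, neg ?Z}" .
  then show ?thesis by (intro rs) (simp add: insert_commute)
qed

lemma cstar1: "prov {BoxC (Star p) \<phi>} {\<phi>}"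
proof -
  let ?Z = "BoxC (Star p) \<phi>"
  have "prov {} (insert (Box (Star p) (neg ?Z)) {\<phi>})" using tense[of \<phi> "Star p"] by (simp add: insert_commute)
  from trR[OF star_fwd1 this] have "prov {} {neg ?Z, \<phi>}" .
  then show ?thesis by (rule rs)
qed

lemma cstar2: "prov {BoxC (Star p) \<phi>} {BoxC p (BoxC (Star p) \<phi>)}"
proof -
  let ?Y = "BoxC (Star p) \<phi>"
  have "prov {} (insert (Box (Star p) (neg ?Y)) {\<phi>})" using tense[of \<phi> "Star p"] by (simp add: insert_commute)
  from trR[OF star_F this] have "prov {} {\<phi>, Box (Star p) (Box p (neg ?Y))}" by (simp add: insert_commute)
  from adjC[OF this] have "prov {} {?Y, Box p (neg ?Y)}" .
  from adjC[OF this] have "prov {} {BoxC p ?Y, neg ?Y}" .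
  then show ?thesis by (intro rs) (simp add: insert_commute)
qed

lemma ctest: "prov {BoxC (Test g) \<phi>, g} {\<phi>}"
proof -
  let ?Z = "BoxC (Test g) \<phi>"
  have t: "prov {} {\<phi>, Box (Test g) (neg ?Z)}" using tense[of \<phi> "Test g"] .
  have "prov {g} {\<phi>, neg ?Z}"
  proof (rule Cut[of _ "Box (Test g) (neg ?Z)"])
    show "prov {g} (insert (Box (Test g) (neg ?Z)) {\<phi>, neg ?Z})" by (rule wk[OF t]) auto
    show "prov (insert (Box (Test g) (neg ?Z)) {g}) {\<phi>, neg ?Z}" by (rule wk[OF test_fwd]) auto
  qed
  then have "prov {g} (insert (neg ?Z) {\<phi>})" by (simp add: insert_commute)
  from negR_inv[OF this] show ?thesis by simp
qed

context canon begin

definition compat :: "'a \<Rightarrow> ('p,'a) fm set \<Rightarrow> ('p,'a) fm set \<Rightarrow> bool" where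
  "compat a A B \<longleftrightarrow> (\<forall>f. Box (At a) f \<in> A \<longrightarrow> f \<in> B) \<and> (\<forall>f. BoxC (At a) f \<in> B \<longrightarrow> f \<in> A)"

definition M :: "(('p,'a) fm set, 'p, 'a) model" where
  "M = \<lparr>W = {A. atom A}, R = (\<lambda>a. {(A,B). atom A \<and> atom B \<and> compat a A B}), V = (\<lambda>A. {p. Atom p \<in> A})\<rparr>"

lemma M_simps[simp]: "W M = {A. atom A}" "R M a = {(A,B). atom A \<and> atom B \<and> compat a A B}"
  "V M A = {p. Atom p \<in> A}"
  by (simp_all add: M_def)

definition cons :: "('p,'a) pg \<Rightarrow> ('p,'a) fm set \<Rightarrow> ('p,'a) fm set \<Rightarrow> bool" where
  "cons \<pi> A B \<longleftrightarrow> \<not> prov {ch A} {Box \<pi> (neg (ch B))}"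

definition occ :: "('p,'a) pg \<Rightarrow> bool" where
  "occ \<pi> \<longleftrightarrow> (\<exists>f. Box \<pi> f \<in> C \<or> BoxC \<pi> f \<in> C)"

lemma rel_W: "rel M \<pi> \<subseteq> {A. atom A} \<times> {A. atom A}"
proof (induction \<pi>)
  case (Star \<pi>)
  then show ?case using trancl_subset_Sigma[OF Star] by (auto simp: Id_on_def)
qed auto

lemma rel_W1: "(A, B) \<in> rel M \<pi> \<Longrightarrow> atom A \<and> atom B"
  using rel_W by blast

lemma cl_succ: "X \<in> C \<Longrightarrow> Y \<in> succ X \<Longrightarrow> Y \<in> C"
  using closed by blast

lemma occ_seq: "occ (Seq p q) \<Longrightarrow> occ p \<and> occ q"
  unfolding occ_def using cl_succ by (metis insertCI succ.simps(5) succ.simps(10))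

lemma occ_ch: "occ (Ch p q) \<Longrightarrow> occ p \<and> occ q"
  unfolding occ_def using cl_succ by (metis insertCI succ.simps(6) succ.simps(11))

lemma occ_star: "occ (Star p) \<Longrightarrow> occ p"
  unfolding occ_def using cl_succ by (metis insertCI succ.simps(7) succ.simps(12))

lemma occ_test: "occ (Test g) \<Longrightarrow> g \<in> C"
  unfolding occ_def using cl_succ by (metis insertCI succ.simps(8) succ.simps(13))

lemma atom_C: "atom A \<Longrightarrow> f \<in> A \<Longrightarrow> f \<in> C"
  by (auto simp: atom_def)

end

lemma contra: "prov {a} {b} \<Longrightarrow> prov {neg b} {neg a}"
proof -
  assume h: "prov {a} {b}"
  have "prov (insert (neg b) {a}) {}" by (rule negL) (use h in simp)
  then have "prov (insert a {neg b}) {}" by (simp add: insert_commute)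
  from negR[OF this] show ?thesis by simp
qed

context canon begin

definition "P1 f \<longleftrightarrow> (f \<in> C \<longrightarrow> (\<forall>A. atom A \<longrightarrow> (sat M A f \<longleftrightarrow> f \<in> A)))"
definition "Pa \<pi> \<longleftrightarrow> (\<forall>A B. atom A \<longrightarrow> atom B \<longrightarrow> cons \<pi> A B \<longrightarrow> (A,B) \<in> rel M \<pi>)"
definition "Pb \<pi> \<longleftrightarrow> (\<forall>\<phi> A B. Box \<pi> \<phi> \<in> A \<longrightarrow> atom A \<longrightarrow> (A,B) \<in> rel M \<pi> \<longrightarrow> \<phi> \<in> B)"
definition "Pc \<pi> \<longleftrightarrow> (\<forall>\<phi> A B. BoxC \<pi> \<phi> \<in> B \<longrightarrow> atom B \<longrightarrow> (A,B) \<in> rel M \<pi> \<longrightarrow> \<phi> \<in> A)"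
definition "P2 \<pi> \<longleftrightarrow> (occ \<pi> \<longrightarrow> Pa \<pi> \<and> Pb \<pi> \<and> Pc \<pi>)"

lemma ch_nmemR: "atom B \<Longrightarrow> f \<in> C \<Longrightarrow> f \<notin> B \<Longrightarrow> prov {f} {neg (ch B)}"
proof -
  assume a: "atom B" "f \<in> C" "f \<notin> B"
  have "prov (insert (ch B) {f}) {}" using ch_nmem[OF a] by simp
  from negR[OF this] show ?thesis by simp
qed

lemma at_a: "Pa (At a)"
  unfolding Pa_def
proof (intro allI impI)
  fix A B assume atA: "atom A" and atB: "atom B" and c: "cons (At a) A B"
  have "compat a A B" unfolding compat_def
  proof (intro conjI allI impI)
    fix f assume fA: "Box (At a) f \<in> A"
    have fC: "f \<in> C" using cl_succ[OF atom_C[OF atA fA]] by simp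
    show "f \<in> B"
    proof (rule ccontr)
      assume "f \<notin> B"
      have 1: "prov {ch A} {Box (At a) f}" by (rule ch_mem[OF atA fA])
      have 2: "prov {f} {neg (ch B)}" by (rule ch_nmemR) fact+
      have "prov {ch A} {Box (At a) (neg (ch B))}" by (rule trans1[OF 1 K1[OF 2]])
      with c show False by (simp add: cons_def)
    qed
  next
    fix f assume fB: "BoxC (At a) f \<in> B"
    have fC: "f \<in> C" using cl_succ[OF atom_C[OF atB fB]] by simp
    show "f \<in> A"
    proof (rule ccontr)
      assume nA: "f \<notin> A"
      have 1: "prov {neg (BoxC (At a) f)} {neg (ch B)}" by (rule contra[OF ch_mem[OF atB fB]])
      have t: "prov {} (insert (Box (At a) (neg (BoxC (At a) f))) {f})"
        using tense[of f "At a"] by (simp add: insert_commute)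
      have 2: "prov {} (insert (Box (At a) (neg (ch B))) {f})" by (rule trR[OF K1[OF 1] t])
      have "prov {ch A} {Box (At a) (neg (ch B))}"
      proof (rule Cut[of _ f])
        show "prov {ch A} (insert f {Box (At a) (neg (ch B))})" by (rule wk[OF 2]) auto
        show "prov (insert f {ch A}) {Box (At a) (neg (ch B))}"
          by (rule wk[OF ch_nmem[OF atA fC nA]]) auto
      qed
      with c show False by (simp add: cons_def)
    qed
  qed
  then show "(A, B) \<in> rel M (At a)" using atA atB by simp
qed

lemma at_P2: "P2 (At a)"
  unfolding P2_def using at_a by (auto simp: Pb_def Pc_def compat_def)

lemma negch_fin: "finite ((\<lambda>E. neg (ch E)) ` S)" if "S \<subseteq> {E. atom E}"
  using that atoms_fin finite_subset by blast

lemma seq_P2: "P2 p \<Longrightarrow> P2 q \<Longrightarrow> P2 (Seq p q)"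
proof -
  assume hp: "P2 p" and hq: "P2 q"
  show ?thesis unfolding P2_def
  proof (intro impI conjI)
    assume o: "occ (Seq p q)"
    then have op: "Pa p" "Pb p" "Pc p" and oq: "Pa q" "Pb q" "Pc q"
    proof -
      have "occ p" "occ q" using occ_seq[OF o] by auto
      then show "Pa p" "Pb p" "Pc p" "Pa q" "Pb q" "Pc q" using hp hq unfolding P2_def by blast+
    qed
    show "Pa (Seq p q)" unfolding Pa_def
    proof (intro allI impI)
      fix A B assume atA: "atom A" and atB: "atom B" and c: "cons (Seq p q) A B"
      have "\<exists>D. atom D \<and> cons p A D \<and> cons q D B"
      proof (rule ccontr)
        assume nex: "\<not> (\<exists>D. atom D \<and> cons p A D \<and> cons q D B)"
        let ?Bad = "{D. atom D \<and> \<not> cons p A D}"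
        let ?T = "(\<lambda>E. neg (ch E)) ` ?Bad"
        have "prov ?T {Box q (neg (ch B))}"
        proof (rule EXH)
          show "?Bad \<subseteq> {A. atom A}" by auto
          show "\<forall>Ba. atom Ba \<longrightarrow> Ba \<notin> ?Bad \<longrightarrow> prov {ch Ba} {Box q (neg (ch B))}"
            using nex unfolding cons_def by blast
        qed
        have "prov {ch A} (insert (Box p (Box q (neg (ch B)))) {})"
        proof (rule BoxMulti)
          show "finite ?T" by (rule negch_fin) auto
          show "\<forall>x\<in>?T. prov {ch A} (insert (Box p x) {})" unfolding cons_def by blast
          show "prov ?T {Box q (neg (ch B))}" by fact
        qed simp_all
        from SeqR[OF this] c show False by (simp add: cons_def)
      qed
      then obtain D where D: "atom D" "cons p A D" "cons q D B" by blast
      have "(A, D) \<in> rel M p" using op(1) atA D unfolding Pa_def by blast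
      moreover have "(D, B) \<in> rel M q" using oq(1) atB D unfolding Pa_def by blast
      ultimately show "(A, B) \<in> rel M (Seq p q)" by (simp add: relcomp.relcompI)
    qed
    show "Pb (Seq p q)" unfolding Pb_def
    proof (intro allI impI)
      fix \<phi> A B assume h: "Box (Seq p q) \<phi> \<in> A" "atom A" "(A, B) \<in> rel M (Seq p q)"
      then obtain D where D: "(A, D) \<in> rel M p" "(D, B) \<in> rel M q" by auto
      have "Box p (Box q \<phi>) \<in> A"
        by (rule atom_mp1[OF h(2) h(1) _ seq_fwd]) (use cl_succ[OF atom_C[OF h(2) h(1)]] in simp)
      then have "Box q \<phi> \<in> D" using op(2) D h unfolding Pb_def by blast
      then show "\<phi> \<in> B" using oq(2) D rel_W1 unfolding Pb_def by blast
    qed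
    show "Pc (Seq p q)" unfolding Pc_def
    proof (intro allI impI)
      fix \<phi> A B assume h: "BoxC (Seq p q) \<phi> \<in> B" "atom B" "(A, B) \<in> rel M (Seq p q)"
      then obtain D where D: "(A, D) \<in> rel M p" "(D, B) \<in> rel M q" by auto
      have "BoxC q (BoxC p \<phi>) \<in> B"
        by (rule atom_mp1[OF h(2) h(1) _ cseq]) (use cl_succ[OF atom_C[OF h(2) h(1)]] in simp)
      then have "BoxC p \<phi> \<in> D" using oq(3) D h unfolding Pc_def by blast
      then show "\<phi> \<in> A" using op(3) D rel_W1 unfolding Pc_def by blast
    qed
  qed
qed

lemma ch_P2: "P2 p \<Longrightarrow> P2 q \<Longrightarrow> P2 (Ch p q)"
proof -
  assume hp: "P2 p" and hq: "P2 q"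
  show ?thesis unfolding P2_def
  proof (intro impI conjI)
    assume o: "occ (Ch p q)"
    then have op: "Pa p" "Pb p" "Pc p" and oq: "Pa q" "Pb q" "Pc q"
    proof -
      have "occ p" "occ q" using occ_ch[OF o] by auto
      then show "Pa p" "Pb p" "Pc p" "Pa q" "Pb q" "Pc q" using hp hq unfolding P2_def by blast+
    qed
    show "Pa (Ch p q)" unfolding Pa_def
    proof (intro allI impI)
      fix A B assume atA: "atom A" and atB: "atom B" and c: "cons (Ch p q) A B"
      have "cons p A B \<or> cons q A B"
      proof (rule ccontr)
        assume "\<not> (cons p A B \<or> cons q A B)"
        then have "prov {ch A} (insert (Box p (neg (ch B))) {})" "prov {ch A} (insert (Box q (neg (ch B))) {})"
          by (auto simp: cons_def)
        from ChR[OF this] c show False by (simp add: cons_def)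
      qed
      then have "(A, B) \<in> rel M p \<or> (A, B) \<in> rel M q" using op(1) oq(1) atA atB unfolding Pa_def by blast
      then show "(A, B) \<in> rel M (Ch p q)" by simp
    qed
    show "Pb (Ch p q)" unfolding Pb_def
    proof (intro allI impI)
      fix \<phi> A B assume h: "Box (Ch p q) \<phi> \<in> A" "atom A" "(A, B) \<in> rel M (Ch p q)"
      have s: "succ (Box (Ch p q) \<phi>) \<subseteq> C" using closed atom_C[OF h(2) h(1)] by blast
      have "Box p \<phi> \<in> A" by (rule atom_mp1[OF h(2) h(1) _ ch_fwd1]) (use s in simp)
      moreover have "Box q \<phi> \<in> A" by (rule atom_mp1[OF h(2) h(1) _ ch_fwd2]) (use s in simp)
      moreover have "(A, B) \<in> rel M p \<or> (A, B) \<in> rel M q" using h(3) by simp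
      ultimately show "\<phi> \<in> B" using op(2) oq(2) h(2) unfolding Pb_def by blast
    qed
    show "Pc (Ch p q)" unfolding Pc_def
    proof (intro allI impI)
      fix \<phi> A B assume h: "BoxC (Ch p q) \<phi> \<in> B" "atom B" "(A, B) \<in> rel M (Ch p q)"
      have s: "succ (BoxC (Ch p q) \<phi>) \<subseteq> C" using closed atom_C[OF h(2) h(1)] by blast
      have "BoxC p \<phi> \<in> B" by (rule atom_mp1[OF h(2) h(1) _ cch1]) (use s in simp)
      moreover have "BoxC q \<phi> \<in> B" by (rule atom_mp1[OF h(2) h(1) _ cch2]) (use s in simp)
      moreover have "(A, B) \<in> rel M p \<or> (A, B) \<in> rel M q" using h(3) by simp
      ultimately show "\<phi> \<in> A" using op(3) oq(3) h(2) unfolding Pc_def by blast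
    qed
  qed
qed

lemma test_P2: "P1 g \<Longrightarrow> P2 (Test g)"
proof -
  assume hg: "P1 g"
  show ?thesis unfolding P2_def
  proof (intro impI conjI)
    assume o: "occ (Test g)"
    then have gC: "g \<in> C" by (rule occ_test)
    then have tr: "\<And>A. atom A \<Longrightarrow> sat M A g \<longleftrightarrow> g \<in> A" using hg by (auto simp: P1_def)
    show "Pa (Test g)" unfolding Pa_def
    proof (intro allI impI)
      fix A B assume atA: "atom A" and atB: "atom B" and c: "cons (Test g) A B"
      have "A = B \<and> g \<in> A"
      proof (rule ccontr)
        assume n: "\<not> (A = B \<and> g \<in> A)"
        have "prov {ch B, g, ch A} {}"
        proof (cases "A = B")
          case True
          with n have "g \<notin> A" by simp
          from ch_nmem[OF atA gC this] show ?thesis by (rule wk) auto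
        next
          case False
          from ch_distinct[OF atA atB False] show ?thesis by (rule wk) auto
        qed
        then have "prov (insert (ch B) (insert g {ch A})) {}" by simp
        from negR[OF this] have "prov (insert g {ch A}) (insert (neg (ch B)) {})" .
        from TestR[OF this] c show False by (simp add: cons_def)
      qed
      then show "(A, B) \<in> rel M (Test g)" using tr atA by auto
    qed
    show "Pb (Test g)" unfolding Pb_def
    proof (intro allI impI)
      fix \<phi> A B assume h: "Box (Test g) \<phi> \<in> A" "atom A" "(A, B) \<in> rel M (Test g)"
      then have AB: "A = B" "g \<in> A" using tr by auto
      have "\<phi> \<in> A"
        by (rule atom_mp[OF h(2) _ _ test_fwd]) (use h AB cl_succ[OF atom_C[OF h(2) h(1)]] in auto)
      then show "\<phi> \<in> B" using AB by simp
    qed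
    show "Pc (Test g)" unfolding Pc_def
    proof (intro allI impI)
      fix \<phi> A B assume h: "BoxC (Test g) \<phi> \<in> B" "atom B" "(A, B) \<in> rel M (Test g)"
      then have AB: "A = B" "g \<in> A" using tr by auto
      have "\<phi> \<in> B"
        by (rule atom_mp[OF h(2) _ _ ctest]) (use h AB cl_succ[OF atom_C[OF h(2) h(1)]] in auto)
      then show "\<phi> \<in> A" using AB by simp
    qed
  qed
qed

end

lemma conv: "prov {a} {Box \<pi> (neg b)} \<Longrightarrow> prov {b} {BoxC \<pi> (neg a)}"
proof -
  assume h: "prov {a} {Box \<pi> (neg b)}"
  from adjC[OF rs'[OF h]] have "prov {} {neg b, BoxC \<pi> (neg a)}" by (simp add: insert_commute)
  then show ?thesis by (rule rs)
qed

lemma f_succB: "f \<in> succ (Box \<pi> f)" by (cases \<pi>) auto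
lemma f_succC: "f \<in> succ (BoxC \<pi> f)" by (cases \<pi>) auto

context canon begin

lemma star_P2: "P2 p \<Longrightarrow> P2 (Star p)"
proof -
  assume hp: "P2 p"
  show ?thesis unfolding P2_def
  proof (intro impI conjI)
    assume o: "occ (Star p)"
    have op: "Pa p" "Pb p" "Pc p" using occ_star[OF o] hp unfolding P2_def by blast+
    show "Pa (Star p)" unfolding Pa_def
    proof (intro allI impI)
      fix A B assume atA: "atom A" and atB: "atom B" and c: "cons (Star p) A B"
      show "(A, B) \<in> rel M (Star p)"
      proof (rule ccontr)
        assume nB: "(A, B) \<notin> rel M (Star p)"
        define S where "S = {D. atom D \<and> (A, D) \<in> rel M (Star p)}"
        define Bad where "Bad = {E. atom E} - S"
        have BadA: "Bad \<subseteq> {E. atom E}" by (auto simp: Bad_def)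
        have fT: "finite ((\<lambda>E. neg (ch E)) ` Bad)" by (rule negch_fin[OF BadA])
        obtain Es where Es: "set Es = (\<lambda>E. neg (ch E)) ` Bad" using finite_list[OF fT] by blast
        define \<delta> where "\<delta> = conjs Es"
        have AS: "A \<in> S" using atA by (auto simp: S_def Id_on_def)
        have BB: "B \<in> Bad" using atB nB by (auto simp: S_def Bad_def)
        have i: "prov {ch D} {\<delta>}" if D: "D \<in> S" for D
          unfolding \<delta>_def
        proof (rule conjR[of "{ch D}" "{}", simplified], intro ballI)
          fix x assume "x \<in> set Es"
          then obtain E where E: "E \<in> Bad" "x = neg (ch E)" using Es by auto
          have "atom D" "atom E" "E \<noteq> D" using D E by (auto simp: S_def Bad_def)
          from ch_distinct[OF this(2,1,3)] have "prov (insert (ch E) {ch D}) {}" by (simp add: insert_commute)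
          from negR[OF this] show "prov {ch D} {x}" using E by simp
        qed
        have ii: "prov {ch D} {Box p (neg (ch E))}" if D: "D \<in> S" and E: "E \<in> Bad" for D E
        proof (rule ccontr)
          assume "\<not> prov {ch D} {Box p (neg (ch E))}"
          then have "cons p D E" by (simp add: cons_def)
          moreover have "atom D" "atom E" using D E by (auto simp: S_def Bad_def)
          ultimately have DE: "(D, E) \<in> rel M p" using op(1) unfolding Pa_def by blast
          have "(A, D) \<in> Id_on {A. atom A} \<or> (A, D) \<in> (rel M p)\<^sup>+" using D by (auto simp: S_def)
          then have "(A, E) \<in> (rel M p)\<^sup>+"
          proof
            assume "(A, D) \<in> Id_on {A. atom A}"
            then have "A = D" by (auto simp: Id_on_def)
            then show ?thesis using DE by auto
          next
            assume "(A, D) \<in> (rel M p)\<^sup>+"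
            then show ?thesis using DE by (rule trancl_into_trancl)
          qed
          then have "E \<in> S" using \<open>atom E\<close> by (auto simp: S_def)
          with E show False by (auto simp: Bad_def)
        qed
        have Td: "prov (set Es) {\<delta>}" unfolding \<delta>_def
          by (rule conjR[of "set Es" "{}", simplified]) (auto intro: ax)
        have iii: "prov {ch D} {Box p \<delta>}" if D: "D \<in> S" for D
        proof -
          have "prov {ch D} (insert (Box p \<delta>) {})"
          proof (rule BoxMulti[OF _ _ Td])
            show "finite (set Es)" by simp
            show "\<forall>x\<in>set Es. prov {ch D} (insert (Box p x) {})" using ii[OF D] Es by auto
          qed simp_all
          then show ?thesis by simp
        qed
        have iv: "prov {\<delta>} {Box p \<delta>}"
        proof -
          have "prov ((\<lambda>E. neg (ch E)) ` Bad) {Box p \<delta>}"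
          proof (rule EXH[OF BadA], intro allI impI)
            fix B' assume "atom B'" "B' \<notin> Bad"
            then have "B' \<in> S" by (auto simp: Bad_def)
            then show "prov {ch B'} {Box p \<delta>}" by (rule iii)
          qed
          then have "prov (set Es \<union> {}) {Box p \<delta>}" using Es by simp
          from conjL[OF this] show ?thesis unfolding \<delta>_def by simp
        qed
        have v: "prov {\<delta>} {Box (Star p) \<delta>}"
          using StarR[of \<delta> "{}" p] iv by (simp add: boxes_def)
        have vi: "prov {\<delta>} {neg (ch B)}"
        proof -
          have "prov (set Es \<union> {}) {neg (ch B)}" by (rule ax) (use Es BB fT in auto)
          from conjL[OF this] show ?thesis unfolding \<delta>_def by simp
        qed
        have "prov {ch A} {Box (Star p) (neg (ch B))}"
          by (rule trans1[OF i[OF AS] trans1[OF v K1[OF vi]]])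
        with c show False by (simp add: cons_def)
      qed
    qed
    show "Pb (Star p)" unfolding Pb_def
    proof (intro allI impI)
      fix \<phi> A B assume h: "Box (Star p) \<phi> \<in> A" "atom A" "(A, B) \<in> rel M (Star p)"
      let ?X = "Box (Star p) \<phi>"
      have stp: "?X \<in> E" if "?X \<in> D" "atom D" "(D, E) \<in> rel M p" for D E
      proof -
        have "Box p ?X \<in> D"
          by (rule atom_mp1[OF that(2) that(1) _ star_fwd2]) (use cl_succ[OF atom_C[OF that(2) that(1)]] in simp)
        then show ?thesis using op(2) that unfolding Pb_def by blast
      qed
      have "?X \<in> B \<and> atom B"
      proof (cases "(A, B) \<in> Id_on {A. atom A}")
        case True then show ?thesis using h by (auto simp: Id_on_def)
      next
        case False
        then have "(A, B) \<in> (rel M p)\<^sup>+" using h(3) by simp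
        then show ?thesis
        proof (induction rule: trancl_induct)
          case (base y) then show ?case using stp h rel_W1 by blast
        next
          case (step y z) then show ?case using stp rel_W1 by blast
        qed
      qed
      then show "\<phi> \<in> B"
        using atom_mp1[OF _ _ _ star_fwd1] cl_succ[OF atom_C[OF h(2) h(1)]] by (auto simp: f_succB)
    qed
    show "Pc (Star p)" unfolding Pc_def
    proof (intro allI impI)
      fix \<phi> A B assume h: "BoxC (Star p) \<phi> \<in> B" "atom B" "(A, B) \<in> rel M (Star p)"
      let ?X = "BoxC (Star p) \<phi>"
      have stp: "?X \<in> D" if "?X \<in> E" "atom E" "(D, E) \<in> rel M p" for D E
      proof -
        have "BoxC p ?X \<in> E"
          by (rule atom_mp1[OF that(2) that(1) _ cstar2]) (use cl_succ[OF atom_C[OF that(2) that(1)]] in simp)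
        then show ?thesis using op(3) that unfolding Pc_def by blast
      qed
      have "?X \<in> A \<and> atom A"
      proof (cases "(A, B) \<in> Id_on {A. atom A}")
        case True then show ?thesis using h by (auto simp: Id_on_def)
      next
        case False
        then have "(A, B) \<in> (rel M p)\<^sup>+" using h(3) by simp
        then show ?thesis
        proof (induction rule: converse_trancl_induct)
          case (base y) then show ?case using stp h rel_W1 by blast
        next
          case (step y z) then show ?case using stp rel_W1 by blast
        qed
      qed
      then show "\<phi> \<in> A"
        using atom_mp1[OF _ _ _ cstar1] cl_succ[OF atom_C[OF h(2) h(1)]] by (auto simp: f_succC)
    qed
  qed
qed

end

context canon begin

lemma bot_P1: "P1 Bot"
  unfolding P1_def
proof (intro impI allI)
  fix A assume at: "atom A"
  have "prov (insert Bot {}) {}" by (rule BotL) auto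
  then have "Bot \<notin> A" using atom_no[OF at, of "{Bot}" "{}"] by auto
  then show "sat M A Bot \<longleftrightarrow> Bot \<in> A" by simp
qed

lemma atom_P1: "P1 (Atom x)"
  unfolding P1_def by simp

lemma imp_P1: "P1 f \<Longrightarrow> P1 g \<Longrightarrow> P1 (Imp f g)"
  unfolding P1_def
proof (intro impI allI)
  assume hf: "f \<in> C \<longrightarrow> (\<forall>A. atom A \<longrightarrow> sat M A f = (f \<in> A))"
    and hg: "g \<in> C \<longrightarrow> (\<forall>A. atom A \<longrightarrow> sat M A g = (g \<in> A))"
    and iC: "Imp f g \<in> C"
  fix A assume at: "atom A"
  have fC: "f \<in> C" and gC: "g \<in> C" using cl_succ[OF iC] by auto
  have d1: "prov {Imp f g, f} {g}"
    using ImpL[of "{f}" f "{g}" g] by (auto intro: ax)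
  have d2: "prov {} {f, Imp f g}"
    using ImpR[of f "{}" g "{f}"] by (auto intro: ax simp: insert_commute)
  have d3: "prov {g} {Imp f g}"
    using ImpR[of f "{g}" g "{}"] by (auto intro: ax)
  have "Imp f g \<in> A \<longleftrightarrow> (f \<in> A \<longrightarrow> g \<in> A)"
  proof
    assume "Imp f g \<in> A"
    then show "f \<in> A \<longrightarrow> g \<in> A" using atom_mp[OF at _ gC d1] by auto
  next
    assume fg: "f \<in> A \<longrightarrow> g \<in> A"
    show "Imp f g \<in> A"
    proof (cases "f \<in> A")
      case True then show ?thesis using fg atom_mp1[OF at _ iC d3] by auto
    next
      case False
      show ?thesis
      proof (rule ccontr)
        assume "Imp f g \<notin> A"
        with False fC iC have "{f, Imp f g} \<subseteq> C - A" by auto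
        from atom_no[OF at _ this] d2 show False by auto
      qed
    qed
  qed
  then show "sat M A (Imp f g) \<longleftrightarrow> Imp f g \<in> A" using hf hg fC gC at by simp
qed

lemma box_P1: "P2 \<pi> \<Longrightarrow> P1 f \<Longrightarrow> P1 (Box \<pi> f)"
proof -
  assume h2: "P2 \<pi>" and h1: "P1 f"
  show ?thesis unfolding P1_def
  proof (intro impI allI)
    assume iC: "Box \<pi> f \<in> C"
    fix A assume at: "atom A"
    have o: "occ \<pi>" using iC by (auto simp: occ_def)
    have pa: "Pa \<pi>" and pb: "Pb \<pi>" using h2 o by (auto simp: P2_def)
    have fC: "f \<in> C" using cl_succ[OF iC f_succB] .
    have tr: "\<And>B. atom B \<Longrightarrow> sat M B f \<longleftrightarrow> f \<in> B" using h1 fC by (auto simp: P1_def)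
    show "sat M A (Box \<pi> f) \<longleftrightarrow> Box \<pi> f \<in> A"
    proof
      assume s: "sat M A (Box \<pi> f)"
      show "Box \<pi> f \<in> A"
      proof (rule ccontr)
        assume nA: "Box \<pi> f \<notin> A"
        have "\<exists>B. atom B \<and> f \<notin> B \<and> cons \<pi> A B"
        proof (rule ccontr)
          assume nex: "\<not> (\<exists>B. atom B \<and> f \<notin> B \<and> cons \<pi> A B)"
          let ?Bad = "{B. atom B \<and> f \<notin> B}"
          let ?T = "(\<lambda>E. neg (ch E)) ` ?Bad"
          have e: "prov ?T {f}"
          proof (rule EXH)
            show "?Bad \<subseteq> {A. atom A}" by auto
            show "\<forall>B. atom B \<longrightarrow> B \<notin> ?Bad \<longrightarrow> prov {ch B} {f}" using ch_mem by blast
          qed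
          have "prov {ch A} (insert (Box \<pi> f) {})"
          proof (rule BoxMulti[OF _ _ e])
            show "finite ?T" by (rule negch_fin) auto
            show "\<forall>x\<in>?T. prov {ch A} (insert (Box \<pi> x) {})" using nex unfolding cons_def by blast
          qed simp_all
          then have "prov (A \<union> {}) ((C - A) \<union> {Box \<pi> f})"
            using ch_iff[of A "{}" "{Box \<pi> f}"] at by (auto simp: atom_def)
          moreover have "(C - A) \<union> {Box \<pi> f} = C - A" using iC nA by auto
          ultimately show False using at by (simp add: atom_def)
        qed
        then obtain B where B: "atom B" "f \<notin> B" "cons \<pi> A B" by blast
        have "(A, B) \<in> rel M \<pi>" using pa at B unfolding Pa_def by blast
        then have "sat M B f" using s by simp
        with B tr show False by simp
      qed
    next
      assume i: "Box \<pi> f \<in> A"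
      show "sat M A (Box \<pi> f)"
      proof (simp, intro allI impI)
        fix v assume v: "(A, v) \<in> rel M \<pi>"
        have "f \<in> v" using pb i at v unfolding Pb_def by blast
        then show "sat M v f" using tr rel_W1[OF v] by simp
      qed
    qed
  qed
qed

lemma boxC_P1: "P2 \<pi> \<Longrightarrow> P1 f \<Longrightarrow> P1 (BoxC \<pi> f)"
proof -
  assume h2: "P2 \<pi>" and h1: "P1 f"
  show ?thesis unfolding P1_def
  proof (intro impI allI)
    assume iC: "BoxC \<pi> f \<in> C"
    fix B assume at: "atom B"
    have o: "occ \<pi>" using iC by (auto simp: occ_def)
    have pa: "Pa \<pi>" and pc: "Pc \<pi>" using h2 o by (auto simp: P2_def)
    have fC: "f \<in> C" using cl_succ[OF iC f_succC] .
    have tr: "\<And>B. atom B \<Longrightarrow> sat M B f \<longleftrightarrow> f \<in> B" using h1 fC by (auto simp: P1_def)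
    show "sat M B (BoxC \<pi> f) \<longleftrightarrow> BoxC \<pi> f \<in> B"
    proof
      assume s: "sat M B (BoxC \<pi> f)"
      show "BoxC \<pi> f \<in> B"
      proof (rule ccontr)
        assume nB: "BoxC \<pi> f \<notin> B"
        have "\<exists>A. atom A \<and> f \<notin> A \<and> cons \<pi> A B"
        proof (rule ccontr)
          assume nex: "\<not> (\<exists>A. atom A \<and> f \<notin> A \<and> cons \<pi> A B)"
          let ?Bad = "{B. atom B \<and> f \<notin> B}"
          let ?T = "(\<lambda>E. neg (ch E)) ` ?Bad"
          have e: "prov ?T {f}"
          proof (rule EXH)
            show "?Bad \<subseteq> {A. atom A}" by auto
            show "\<forall>B. atom B \<longrightarrow> B \<notin> ?Bad \<longrightarrow> prov {ch B} {f}" using ch_mem by blast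
          qed
          have "prov {ch B} (insert (BoxC \<pi> f) {})"
          proof (rule BoxCMulti[OF _ _ e])
            show "finite ?T" by (rule negch_fin) auto
            show "\<forall>x\<in>?T. prov {ch B} (insert (BoxC \<pi> x) {})"
            proof
              fix x assume "x \<in> ?T"
              then obtain A where A: "atom A" "f \<notin> A" "x = neg (ch A)" by auto
              then have "prov {ch A} {Box \<pi> (neg (ch B))}" using nex unfolding cons_def by blast
              from conv[OF this] show "prov {ch B} (insert (BoxC \<pi> x) {})" using A by simp
            qed
          qed simp_all
          then have "prov (B \<union> {}) ((C - B) \<union> {BoxC \<pi> f})"
            using ch_iff[of B "{}" "{BoxC \<pi> f}"] at by (auto simp: atom_def)
          moreover have "(C - B) \<union> {BoxC \<pi> f} = C - B" using iC nB by auto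
          ultimately show False using at by (simp add: atom_def)
        qed
        then obtain A where A: "atom A" "f \<notin> A" "cons \<pi> A B" by blast
        have "(A, B) \<in> rel M \<pi>" using pa at A unfolding Pa_def by blast
        then have "sat M A f" using s by simp
        with A tr show False by simp
      qed
    next
      assume i: "BoxC \<pi> f \<in> B"
      show "sat M B (BoxC \<pi> f)"
      proof (simp, intro allI impI)
        fix v assume v: "(v, B) \<in> rel M \<pi>"
        have "f \<in> v" using pc i at v unfolding Pc_def by blast
        then show "sat M v f" using tr rel_W1[OF v] by simp
      qed
    qed
  qed
qed

lemma main_ind: "P1 f \<and> P2 \<pi>"
  by (rule fm_pg.induct[of P1 P2 f \<pi>])
     (simp_all add: bot_P1 atom_P1 imp_P1 box_P1 boxC_P1 at_P2 seq_P2 ch_P2 star_P2 test_P2)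

lemma truth: "f \<in> C \<Longrightarrow> atom A \<Longrightarrow> sat M A f \<longleftrightarrow> f \<in> A"
  using main_ind[of f] unfolding P1_def by blast

lemma M_model: "atom A \<Longrightarrow> is_model M"
  unfolding is_model_def by auto

end

theorem mainTheorem2:
  fixes \<Gamma> \<Delta> :: "('p, 'a) fm set"
  assumes "finite \<Gamma>" and "finite \<Delta>"
    and "valid \<Gamma> \<Delta>"
  shows "prov \<Gamma> \<Delta>"
proof (rule ccontr)
  assume np: "\<not> prov \<Gamma> \<Delta>"
  let ?S = "\<Union> (cl ` (\<Gamma> \<union> \<Delta>))"
  have fS: "finite ?S" using assms(1,2) cl_fin(1) by auto
  obtain cs where cs: "set cs = ?S" using finite_list[OF fS] by blast
  have cls: "X \<in> set cs \<Longrightarrow> succ X \<subseteq> set cs" for X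
  proof -
    assume "X \<in> set cs"
    then obtain h where h: "h \<in> \<Gamma> \<union> \<Delta>" "X \<in> cl h" using cs by auto
    have "succ X \<subseteq> cl h" using cl_closed(1)[of h] h(2) by blast
    then show ?thesis using h(1) cs by auto
  qed
  interpret canon cs by unfold_locales (rule cls)
  obtain A where A: "A \<subseteq> set cs" "\<not> prov (\<Gamma> \<union> A) (\<Delta> \<union> (set cs - A))"
    using lind[OF finite_set np assms(1,2)] by blast
  have fA: "finite A" using A(1) finite_subset by blast
  have at: "atom A" unfolding atom_def
  proof (intro conjI notI)
    show "A \<subseteq> set cs" by fact
    assume "prov A (set cs - A)"
    then have "prov (\<Gamma> \<union> A) (\<Delta> \<union> (set cs - A))" by (rule wk) (use assms fA in auto)
    with A show False by simp
  qed
  have GC: "\<Gamma> \<subseteq> set cs" "\<Delta> \<subseteq> set cs" using cs cl_self by blast+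
  have GA: "f \<in> A" if "f \<in> \<Gamma>" for f
  proof (rule ccontr)
    assume "f \<notin> A"
    then have "prov (\<Gamma> \<union> A) (\<Delta> \<union> (set cs - A))"
      by (intro ax[of _ _ f]) (use that GC assms fA in auto)
    with A show False by simp
  qed
  have DA: "g \<notin> A" if "g \<in> \<Delta>" for g
  proof
    assume "g \<in> A"
    then have "prov (\<Gamma> \<union> A) (\<Delta> \<union> (set cs - A))"
      by (intro ax[of _ _ g]) (use that assms fA in auto)
    with A show False by simp
  qed
  have "valid_over TYPE(('p, 'a) fm set) \<Gamma> \<Delta>" using assms(3) by (simp add: valid_def)
  then have "\<exists>g\<in>\<Delta>. sat M A g"
  proof -
    have v: "\<And>(M' :: (('p, 'a) fm set, 'p, 'a) model) w. is_model M' \<Longrightarrow> w \<in> W M' \<Longrightarrow>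
        (\<forall>f\<in>\<Gamma>. sat M' w f) \<Longrightarrow> (\<exists>g\<in>\<Delta>. sat M' w g)"
      using \<open>valid_over TYPE(('p, 'a) fm set) \<Gamma> \<Delta>\<close> unfolding valid_over_def by blast
    have "\<forall>f\<in>\<Gamma>. sat M A f"
    proof
      fix f assume f: "f \<in> \<Gamma>"
      have "f \<in> set cs" using GC f by blast
      then show "sat M A f" using truth[OF _ at] GA[OF f] by blast
    qed
    moreover have "A \<in> W M" using at by simp
    ultimately show ?thesis using v[OF M_model[OF at]] by blast
  qed
  then obtain g where g: "g \<in> \<Delta>" "sat M A g" by blast
  have "g \<in> set cs" using GC g by blast
  then have "g \<in> A" using truth[OF _ at] g by blast
  with DA g show False by blast
qed

end
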